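(* Let $\mathcal{O}$ be a small category. If $\sigma\colon\Delta[0]\to N\mathcal{O}$ picks out the object $\sigma_0$, then $\iota_0\colon\mathcal{O}(-,\sigma_0)\times\Delta[0]\to F\sigma$ is an isomorphism. If $n>0$ and $\sigma\colon\Delta[n]\to N\mathcal{O}$ corresponds to $\sigma_0\xrightarrow{g_1}\sigma_1\to\cdots\xrightarrow{g_n}\sigma_n$, then the square $$\begin{array}{ccc}\mathcal{O}(-,\sigma_0)\times\Delta[n-1] & \xrightarrow{\iota_{n-1}\circ (g_{1*}\times 1)} & F(\sigma\delta_0)\\ \downarrow{\scriptstyle 1\times\delta_0} & & \downarrow\\ \mathcal{O}(-,\sigma_0)\times\Delta[n] & \xrightarrow{\iota_n} & F\sigma\end{array}$$ is a pushout of contravariant functors $\mathcal{O}\to\mathcal{S}$, where $\delta_0\colon\Delta[n-1]\to\Delta[n]$ is the inclusion of the face opposite $0$, $g_{1*}\colon\mathcal{O}(-,\sigma_0)\to\mathcal{O}(-,\sigma_1)$ is postcomposition with $g_1$, $\iota_{n-1}$ is the map $\mathcal{O}(-,\sigma_1)\times\Delta[n-1]\to F(\sigma\delta_0)$ for the simplex $\sigma\delta_0$ (whose initial vertex is $\sigma_1$), and the right vertical map is induced by $\delta_0$.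
   Context: $\mathcal{S}$ is the category of simplicial sets, $N$ the nerve, $\Delta[n]$ the standard $n$-simplex, $\mathcal{O}(-,c)$ the representable contravariant set-valued functor. For $\phi\colon X\to N\mathcal{O}$, $F\phi$ is the contravariant functor $\mathcal{O}\to\mathcal{S}$ with $(F\phi)(b)$ the pullback of $X\xrightarrow{\phi}N\mathcal{O}\leftarrow N(b{\downarrow}\mathcal{O})$, functorial in $b$ via precomposition. A $k$-simplex of $(F\sigma)(b)$ for $\sigma\colon\Delta[n]\to N\mathcal{O}$ is a pair $(\alpha,\omega)$ with $\alpha\colon[k]\to[n]$ order-preserving and $\omega=(b\to\sigma\alpha(0)\to\cdots\to\sigma\alpha(k))$ with maps after the first given by $\sigma\alpha(i-1\to i)$. For such $\sigma$ with initial vertex $\sigma_0$, $\iota_n\colon\mathcal{O}(-,\sigma_0)\times\Delta[n]\to F\sigma$ sends $(g,\alpha)\in\mathcal{O}(b,\sigma_0)\times\Delta[n]_k$ to $(\alpha,\omega)$ with $\omega=(b\xrightarrow{\sigma(0\to\alpha(0))\circ g}\sigma\alpha(0)\to\cdots\to\sigma\alpha(k))$. *)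

theory Defs
  imports Main
begin

record ('o, 'm) cat =
  Ob   :: "'o set"
  Ar   :: "'m set"
  Dom  :: "'m \<Rightarrow> 'o"
  Cod  :: "'m \<Rightarrow> 'o"
  Id   :: "'o \<Rightarrow> 'm"
  Comp :: "'m \<Rightarrow> 'm \<Rightarrow> 'm"   (* Comp g f = g o f, defined when Cod f = Dom g *)

definition Hom :: "('o, 'm) cat \<Rightarrow> 'o \<Rightarrow> 'o \<Rightarrow> 'm set" where
  "Hom C a b = {f \<in> Ar C. Dom C f = a \<and> Cod C f = b}"

definition small_category :: "('o, 'm) cat \<Rightarrow> bool" where
  "small_category C \<longleftrightarrow>
     (\<forall>f \<in> Ar C. Dom C f \<in> Ob C \<and> Cod C f \<in> Ob C) \<and>
     (\<forall>a \<in> Ob C. Id C a \<in> Hom C a a) \<and>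
     (\<forall>f \<in> Ar C. \<forall>g \<in> Ar C. Cod C f = Dom C g \<longrightarrow> Comp C g f \<in> Hom C (Dom C f) (Cod C g)) \<and>
     (\<forall>f \<in> Ar C. Comp C f (Id C (Dom C f)) = f \<and> Comp C (Id C (Cod C f)) f = f) \<and>
     (\<forall>f \<in> Ar C. \<forall>g \<in> Ar C. \<forall>h \<in> Ar C. Cod C f = Dom C g \<longrightarrow> Cod C g = Dom C h \<longrightarrow>
         Comp C h (Comp C g f) = Comp C (Comp C h g) f)"

text \<open>Order-preserving maps [k] -> [l], represented extensionally (value 0 outside {0..k}).\<close>
definition Delta :: "nat \<Rightarrow> nat \<Rightarrow> (nat \<Rightarrow> nat) set" where
  "Delta k l = {\<alpha>. (\<forall>i \<le> k. \<alpha> i \<le> l) \<and> (\<forall>i j. i \<le> j \<longrightarrow> j \<le> k \<longrightarrow> \<alpha> i \<le> \<alpha> j)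
                  \<and> (\<forall>i. k < i \<longrightarrow> \<alpha> i = 0)}"

definition dcomp :: "nat \<Rightarrow> (nat \<Rightarrow> nat) \<Rightarrow> (nat \<Rightarrow> nat) \<Rightarrow> (nat \<Rightarrow> nat)" where
  "dcomp k' \<alpha> \<beta> = (\<lambda>i. if i \<le> k' then \<alpha> (\<beta> i) else 0)"

definition did :: "nat \<Rightarrow> (nat \<Rightarrow> nat)" where
  "did k = (\<lambda>i. if i \<le> k then i else 0)"

text \<open>The coface delta_0 : [m] -> [m+1] omitting 0, precomposed: delta_0 o alpha for alpha : [k] -> [m].\<close>
definition delta0_comp :: "nat \<Rightarrow> (nat \<Rightarrow> nat) \<Rightarrow> (nat \<Rightarrow> nat)" where
  "delta0_comp k \<alpha> = (\<lambda>i. if i \<le> k then Suc (\<alpha> i) else 0)"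

section \<open>Contravariant functors O -> sSet (i.e. functors O^op x Delta^op -> Set)\<close>

text \<open>PAct f k k' beta x: for f : b' -> b and beta : [k'] -> [k], the action
  sending a k-simplex x of P(b) to a k'-simplex of P(b').\<close>
record ('o, 'm, 'x) psh =
  PSets :: "'o \<Rightarrow> nat \<Rightarrow> 'x set"
  PAct  :: "'m \<Rightarrow> nat \<Rightarrow> nat \<Rightarrow> (nat \<Rightarrow> nat) \<Rightarrow> 'x \<Rightarrow> 'x"

definition is_presheaf :: "('o, 'm) cat \<Rightarrow> ('o, 'm, 'x) psh \<Rightarrow> bool" where
  "is_presheaf C P \<longleftrightarrow>
     (\<forall>b \<in> Ob C. \<forall>b' \<in> Ob C. \<forall>f \<in> Hom C b' b. \<forall>k k'. \<forall>\<beta> \<in> Delta k' k. \<forall>x \<in> PSets P b k.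
         PAct P f k k' \<beta> x \<in> PSets P b' k') \<and>
     (\<forall>b \<in> Ob C. \<forall>k. \<forall>x \<in> PSets P b k. PAct P (Id C b) k k (did k) x = x) \<and>
     (\<forall>b \<in> Ob C. \<forall>b' \<in> Ob C. \<forall>b'' \<in> Ob C. \<forall>f \<in> Hom C b' b. \<forall>f' \<in> Hom C b'' b'.
       \<forall>k k' k''. \<forall>\<beta> \<in> Delta k' k. \<forall>\<beta>' \<in> Delta k'' k'. \<forall>x \<in> PSets P b k.
         PAct P f' k' k'' \<beta>' (PAct P f k k' \<beta> x) = PAct P (Comp C f f') k k'' (dcomp k'' \<beta> \<beta>') x)"

definition nat_trans ::
  "('o, 'm) cat \<Rightarrow> ('o, 'm, 'x) psh \<Rightarrow> ('o, 'm, 'y) psh \<Rightarrow> ('o \<Rightarrow> nat \<Rightarrow> 'x \<Rightarrow> 'y) \<Rightarrow> bool" where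
  "nat_trans C P Q \<eta> \<longleftrightarrow>
     (\<forall>b \<in> Ob C. \<forall>k. \<forall>x \<in> PSets P b k. \<eta> b k x \<in> PSets Q b k) \<and>
     (\<forall>b \<in> Ob C. \<forall>b' \<in> Ob C. \<forall>f \<in> Hom C b' b. \<forall>k k'. \<forall>\<beta> \<in> Delta k' k. \<forall>x \<in> PSets P b k.
         \<eta> b' k' (PAct P f k k' \<beta> x) = PAct Q f k k' \<beta> (\<eta> b k x))"

definition nat_iso ::
  "('o, 'm) cat \<Rightarrow> ('o, 'm, 'x) psh \<Rightarrow> ('o, 'm, 'y) psh \<Rightarrow> ('o \<Rightarrow> nat \<Rightarrow> 'x \<Rightarrow> 'y) \<Rightarrow> bool" where
  "nat_iso C P Q \<eta> \<longleftrightarrow> is_presheaf C P \<and> is_presheaf C Q \<and> nat_trans C P Q \<eta> \<and>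
     (\<exists>\<theta>. nat_trans C Q P \<theta> \<and>
        (\<forall>b \<in> Ob C. \<forall>k. \<forall>x \<in> PSets P b k. \<theta> b k (\<eta> b k x) = x) \<and>
        (\<forall>b \<in> Ob C. \<forall>k. \<forall>y \<in> PSets Q b k. \<eta> b k (\<theta> b k y) = y))"

text \<open>Pushout square  A --tp--> B, A --lf--> Cc, B --rt--> D, Cc --bt--> D
  in the category of contravariant functors O -> sSet; the universal property is tested
  against presheaves with elements of an arbitrary type 'z.\<close>
definition is_pushout ::
  "'z itself \<Rightarrow> ('o, 'm) cat \<Rightarrow> ('o, 'm, 'a) psh \<Rightarrow> ('o, 'm, 'b) psh \<Rightarrow> ('o, 'm, 'c) psh \<Rightarrow>
   ('o, 'm, 'd) psh \<Rightarrow> ('o \<Rightarrow> nat \<Rightarrow> 'a \<Rightarrow> 'b) \<Rightarrow> ('o \<Rightarrow> nat \<Rightarrow> 'a \<Rightarrow> 'c) \<Rightarrow>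
   ('o \<Rightarrow> nat \<Rightarrow> 'b \<Rightarrow> 'd) \<Rightarrow> ('o \<Rightarrow> nat \<Rightarrow> 'c \<Rightarrow> 'd) \<Rightarrow> bool" where
  "is_pushout _ C A B Cc D tp lf rt bt \<longleftrightarrow>
     is_presheaf C A \<and> is_presheaf C B \<and> is_presheaf C Cc \<and> is_presheaf C D \<and>
     nat_trans C A B tp \<and> nat_trans C A Cc lf \<and> nat_trans C B D rt \<and> nat_trans C Cc D bt \<and>
     (\<forall>b \<in> Ob C. \<forall>k. \<forall>x \<in> PSets A b k. rt b k (tp b k x) = bt b k (lf b k x)) \<and>
     (\<forall>(Z :: ('o, 'm, 'z) psh) u v.
        is_presheaf C Z \<and> nat_trans C B Z u \<and> nat_trans C Cc Z v \<and>
        (\<forall>b \<in> Ob C. \<forall>k. \<forall>x \<in> PSets A b k. u b k (tp b k x) = v b k (lf b k x)) \<longrightarrow>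
        (\<exists>w. nat_trans C D Z w \<and>
             (\<forall>b \<in> Ob C. \<forall>k. \<forall>y \<in> PSets B b k. w b k (rt b k y) = u b k y) \<and>
             (\<forall>b \<in> Ob C. \<forall>k. \<forall>y \<in> PSets Cc b k. w b k (bt b k y) = v b k y)) \<and>
        (\<forall>w w'. nat_trans C D Z w \<and>
             (\<forall>b \<in> Ob C. \<forall>k. \<forall>y \<in> PSets B b k. w b k (rt b k y) = u b k y) \<and>
             (\<forall>b \<in> Ob C. \<forall>k. \<forall>y \<in> PSets Cc b k. w b k (bt b k y) = v b k y) \<and>
             nat_trans C D Z w' \<and>
             (\<forall>b \<in> Ob C. \<forall>k. \<forall>y \<in> PSets B b k. w' b k (rt b k y) = u b k y) \<and>
             (\<forall>b \<in> Ob C. \<forall>k. \<forall>y \<in> PSets Cc b k. w' b k (bt b k y) = v b k y) \<longrightarrow>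
             (\<forall>b \<in> Ob C. \<forall>k. \<forall>z \<in> PSets D b k. w b k z = w' b k z)))"

text \<open>An n-simplex sigma of N O is a chain so 0 --sg 1--> so 1 --> ... --sg n--> so n.
  chainmap so sg i j is sigma(i -> j) for i <= j (composite sg j o ... o sg (i+1)).\<close>
definition is_chain :: "('o, 'm) cat \<Rightarrow> nat \<Rightarrow> (nat \<Rightarrow> 'o) \<Rightarrow> (nat \<Rightarrow> 'm) \<Rightarrow> bool" where
  "is_chain C n so sg \<longleftrightarrow> (\<forall>i \<le> n. so i \<in> Ob C) \<and> (\<forall>i. 1 \<le> i \<longrightarrow> i \<le> n \<longrightarrow> sg i \<in> Hom C (so (i - 1)) (so i))"

fun chainmap :: "('o, 'm) cat \<Rightarrow> (nat \<Rightarrow> 'o) \<Rightarrow> (nat \<Rightarrow> 'm) \<Rightarrow> nat \<Rightarrow> nat \<Rightarrow> 'm" where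
  "chainmap C so sg i 0 = Id C (so i)"
| "chainmap C so sg i (Suc j) = (if Suc j \<le> i then Id C (so i) else Comp C (sg (Suc j)) (chainmap C so sg i j))"

definition rep_times :: "('o, 'm) cat \<Rightarrow> 'o \<Rightarrow> nat \<Rightarrow> ('o, 'm, 'm \<times> (nat \<Rightarrow> nat)) psh" where
  "rep_times C c n =
     \<lparr> PSets = (\<lambda>b k. {(g, \<alpha>). g \<in> Hom C b c \<and> \<alpha> \<in> Delta k n}),
       PAct = (\<lambda>f k k' \<beta> (g, \<alpha>). (Comp C g f, dcomp k' \<alpha> \<beta>)) \<rparr>"

text \<open>A k-simplex of (F sigma)(b) is (alpha, omega) with omega = [h, m_1, ..., m_k] the chain
  b --h--> sigma(alpha 0) --> ... --> sigma(alpha k), m_i = sigma(alpha(i-1) -> alpha i).\<close>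
definition Fsig :: "('o, 'm) cat \<Rightarrow> nat \<Rightarrow> (nat \<Rightarrow> 'o) \<Rightarrow> (nat \<Rightarrow> 'm) \<Rightarrow> ('o, 'm, (nat \<Rightarrow> nat) \<times> 'm list) psh" where
  "Fsig C n so sg =
     \<lparr> PSets = (\<lambda>b k. {(\<alpha>, \<omega>). \<alpha> \<in> Delta k n \<and> length \<omega> = Suc k \<and>
                          \<omega> ! 0 \<in> Hom C b (so (\<alpha> 0)) \<and>
                          (\<forall>i. 1 \<le> i \<longrightarrow> i \<le> k \<longrightarrow> \<omega> ! i = chainmap C so sg (\<alpha> (i - 1)) (\<alpha> i))}),
       PAct = (\<lambda>f k k' \<beta> (\<alpha>, \<omega>).
                 (dcomp k' \<alpha> \<beta>,
                  Comp C (Comp C (chainmap C so sg (\<alpha> 0) (\<alpha> (\<beta> 0))) (\<omega> ! 0)) f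
                  # map (\<lambda>i. chainmap C so sg (\<alpha> (\<beta> (i - 1))) (\<alpha> (\<beta> i))) [1..<Suc k'])) \<rparr>"

definition iota :: "('o, 'm) cat \<Rightarrow> (nat \<Rightarrow> 'o) \<Rightarrow> (nat \<Rightarrow> 'm) \<Rightarrow> 'o \<Rightarrow> nat \<Rightarrow> 'm \<times> (nat \<Rightarrow> nat) \<Rightarrow> (nat \<Rightarrow> nat) \<times> 'm list" where
  "iota C so sg b k = (\<lambda>(g, \<alpha>).
     (\<alpha>, Comp C (chainmap C so sg 0 (\<alpha> 0)) g
          # map (\<lambda>i. chainmap C so sg (\<alpha> (i - 1)) (\<alpha> i)) [1..<Suc k]))"

end

theory Submission
  imports Defs
begin


lemma hom_ar: "f \<in> Hom C a b \<Longrightarrow> f \<in> Ar C \<and> Dom C f = a \<and> Cod C f = b"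
  by (simp add: Hom_def)

lemma comp_hom: "small_category C \<Longrightarrow> f \<in> Hom C a b \<Longrightarrow> g \<in> Hom C b c \<Longrightarrow> Comp C g f \<in> Hom C a c"
  unfolding small_category_def Hom_def by auto

lemma id_hom: "small_category C \<Longrightarrow> a \<in> Ob C \<Longrightarrow> Id C a \<in> Hom C a a"
  unfolding small_category_def by auto

lemma id_l: "small_category C \<Longrightarrow> f \<in> Hom C a b \<Longrightarrow> Comp C (Id C b) f = f"
  unfolding small_category_def Hom_def by auto

lemma id_r: "small_category C \<Longrightarrow> f \<in> Hom C a b \<Longrightarrow> Comp C f (Id C a) = f"
  unfolding small_category_def Hom_def by auto

lemma assoc: "small_category C \<Longrightarrow> f \<in> Hom C a b \<Longrightarrow> g \<in> Hom C b c \<Longrightarrow> h \<in> Hom C c d \<Longrightarrow>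
   Comp C h (Comp C g f) = Comp C (Comp C h g) f"
  unfolding small_category_def Hom_def by auto

lemma hom_ob: "small_category C \<Longrightarrow> f \<in> Hom C a b \<Longrightarrow> a \<in> Ob C \<and> b \<in> Ob C"
  unfolding small_category_def Hom_def by auto

lemma chainmap_id: "j \<le> i \<Longrightarrow> chainmap C so sg i j = Id C (so i)"
  by (induction j) auto

lemma chainmap_shift[simp]:
  "chainmap C (\<lambda>i. so (Suc i)) (\<lambda>i. sg (Suc i)) i j = chainmap C so sg (Suc i) (Suc j)"
  by (induction j) auto

lemma chain_sg: "is_chain C n so sg \<Longrightarrow> Suc j \<le> n \<Longrightarrow> sg (Suc j) \<in> Hom C (so j) (so (Suc j))"
  unfolding is_chain_def by (metis diff_Suc_1 le_add1 plus_1_eq_Suc)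

lemma chain_ob: "is_chain C n so sg \<Longrightarrow> j \<le> n \<Longrightarrow> so j \<in> Ob C"
  unfolding is_chain_def by auto

lemma chainmap_hom:
  assumes "small_category C" "is_chain C n so sg"
  shows "i \<le> j \<Longrightarrow> j \<le> n \<Longrightarrow> chainmap C so sg i j \<in> Hom C (so i) (so j)"
proof (induction j)
  case 0
  then show ?case using assms id_hom[of C "so 0"] by (simp add: is_chain_def)
next
  case (Suc j)
  show ?case
  proof (cases "Suc j \<le> i")
    case True
    then have "i = Suc j" using Suc by simp
    then show ?thesis using assms id_hom[of C "so i"] Suc by (simp add: is_chain_def)
  next
    case False
    then have h1: "chainmap C so sg i j \<in> Hom C (so i) (so j)" using Suc by simp
    have h2: "sg (Suc j) \<in> Hom C (so j) (so (Suc j))" using chain_sg[OF assms(2)] Suc by simp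
    show ?thesis using False comp_hom[OF assms(1) h1 h2] by simp
  qed
qed

lemma chainmap_comp:
  assumes "small_category C" "is_chain C n so sg"
  shows "i \<le> j \<Longrightarrow> j \<le> l \<Longrightarrow> l \<le> n \<Longrightarrow>
     Comp C (chainmap C so sg j l) (chainmap C so sg i j) = chainmap C so sg i l"
proof (induction l)
  case 0
  then show ?case using assms chainmap_hom[OF assms, of 0 0] id_l[OF assms(1)] by auto
next
  case (Suc l)
  show ?case
  proof (cases "Suc l \<le> j")
    case True
    then have "j = Suc l" using Suc by simp
    then show ?thesis using Suc chainmap_hom[OF assms, of i j] id_l[OF assms(1)] chainmap_id[of j j]
      by simp
  next
    case False
    have h1: "chainmap C so sg i j \<in> Hom C (so i) (so j)" using Suc chainmap_hom[OF assms] by simp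
    have h2: "chainmap C so sg j l \<in> Hom C (so j) (so l)" using Suc False chainmap_hom[OF assms] by simp
    have h3: "sg (Suc l) \<in> Hom C (so l) (so (Suc l))" using chain_sg[OF assms(2)] Suc by simp
    have "Comp C (chainmap C so sg j (Suc l)) (chainmap C so sg i j)
        = Comp C (Comp C (sg (Suc l)) (chainmap C so sg j l)) (chainmap C so sg i j)"
      using False by simp
    also have "\<dots> = Comp C (sg (Suc l)) (Comp C (chainmap C so sg j l) (chainmap C so sg i j))"
      using assoc[OF assms(1) h1 h2 h3] by simp
    also have "\<dots> = Comp C (sg (Suc l)) (chainmap C so sg i l)" using Suc False by simp
    also have "\<dots> = chainmap C so sg i (Suc l)" using False Suc by simp
    finally show ?thesis .
  qed
qed

lemma chain_shift: "is_chain C n so sg \<Longrightarrow> 0 < n \<Longrightarrow> is_chain C (n-1) (\<lambda>i. so (Suc i)) (\<lambda>i. sg (Suc i))"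
  unfolding is_chain_def
proof (intro conjI allI impI)
  fix i assume a: "(\<forall>i\<le>n. so i \<in> Ob C) \<and> (\<forall>i. 1 \<le> i \<longrightarrow> i \<le> n \<longrightarrow> sg i \<in> Hom C (so (i - 1)) (so i))" "0 < n"
  { assume "i \<le> n - 1" then show "so (Suc i) \<in> Ob C" using a by auto }
  { assume "1 \<le> i" "i \<le> n - 1"
    then show "sg (Suc i) \<in> Hom C (so (Suc (i - 1))) (so (Suc i))" using a(1)[THEN conjunct2, rule_format, of "Suc i"] by auto }
qed

lemma nth_cons_map_upt[simp]: "1 \<le> i \<Longrightarrow> i \<le> k \<Longrightarrow> (h # map F [1..<Suc k]) ! i = F i"
  by (cases i) (auto simp del: upt_Suc simp add: nth_map)

lemma Delta_le: "\<alpha> \<in> Delta k l \<Longrightarrow> i \<le> k \<Longrightarrow> \<alpha> i \<le> l"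
  by (simp add: Delta_def)
lemma Delta_mono: "\<alpha> \<in> Delta k l \<Longrightarrow> i \<le> j \<Longrightarrow> j \<le> k \<Longrightarrow> \<alpha> i \<le> \<alpha> j"
  by (simp add: Delta_def)
lemma Delta_out: "\<alpha> \<in> Delta k l \<Longrightarrow> k < i \<Longrightarrow> \<alpha> i = 0"
  by (simp add: Delta_def)

lemma dcomp_Delta: "\<alpha> \<in> Delta k n \<Longrightarrow> \<beta> \<in> Delta k' k \<Longrightarrow> dcomp k' \<alpha> \<beta> \<in> Delta k' n"
  unfolding Delta_def dcomp_def by auto

lemma dcomp_did: "\<alpha> \<in> Delta k n \<Longrightarrow> dcomp k \<alpha> (did k) = \<alpha>"
  unfolding Delta_def dcomp_def did_def by auto

lemma dcomp_assoc: "\<beta> \<in> Delta k' k \<Longrightarrow> \<beta>' \<in> Delta k'' k' \<Longrightarrow>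
   dcomp k'' (dcomp k' \<alpha> \<beta>) \<beta>' = dcomp k'' \<alpha> (dcomp k'' \<beta> \<beta>')"
  unfolding Delta_def dcomp_def by auto

lemma dcomp_val[simp]: "i \<le> k' \<Longrightarrow> dcomp k' \<alpha> \<beta> i = \<alpha> (\<beta> i)"
  by (simp add: dcomp_def)

lemma delta0_val[simp]: "i \<le> k \<Longrightarrow> delta0_comp k \<alpha> i = Suc (\<alpha> i)"
  by (simp add: delta0_comp_def)

lemma delta0_Delta: "\<alpha> \<in> Delta k (n-1) \<Longrightarrow> 0 < n \<Longrightarrow> delta0_comp k \<alpha> \<in> Delta k n"
  unfolding Delta_def delta0_comp_def by auto

lemma delta0_dcomp: "\<beta> \<in> Delta k' k \<Longrightarrow> delta0_comp k' (dcomp k' \<alpha> \<beta>) = dcomp k' (delta0_comp k \<alpha>) \<beta>"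
  unfolding Delta_def delta0_comp_def dcomp_def by auto

lemma rep_times_mem[simp]: "((g, \<alpha>) \<in> PSets (rep_times C c n) b k) \<longleftrightarrow> g \<in> Hom C b c \<and> \<alpha> \<in> Delta k n"
  by (simp add: rep_times_def)

lemma rep_times_act[simp]: "PAct (rep_times C c n) f k k' \<beta> (g, \<alpha>) = (Comp C g f, dcomp k' \<alpha> \<beta>)"
  by (simp add: rep_times_def)

lemma rep_times_presheaf: "small_category C \<Longrightarrow> is_presheaf C (rep_times C c n)"
  unfolding is_presheaf_def
  by (auto simp: comp_hom dcomp_Delta id_r dcomp_did dcomp_assoc assoc)

lemma nat_trans_comp: "nat_trans C P Q \<eta> \<Longrightarrow> nat_trans C Q R \<theta> \<Longrightarrow> nat_trans C P R (\<lambda>b k x. \<theta> b k (\<eta> b k x))"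
  unfolding nat_trans_def by auto



lemma Fsig_mem: "((\<alpha>, \<omega>) \<in> PSets (Fsig C n so sg) b k) \<longleftrightarrow>
   \<alpha> \<in> Delta k n \<and> length \<omega> = Suc k \<and> \<omega> ! 0 \<in> Hom C b (so (\<alpha> 0)) \<and>
   (\<forall>i. 1 \<le> i \<longrightarrow> i \<le> k \<longrightarrow> \<omega> ! i = chainmap C so sg (\<alpha> (i - 1)) (\<alpha> i))"
  by (simp add: Fsig_def)

lemma Fsig_act: "PAct (Fsig C n so sg) f k k' \<beta> (\<alpha>, \<omega>) =
   (dcomp k' \<alpha> \<beta>,
    Comp C (Comp C (chainmap C so sg (\<alpha> 0) (\<alpha> (\<beta> 0))) (\<omega> ! 0)) f
    # map (\<lambda>i. chainmap C so sg (\<alpha> (\<beta> (i - 1))) (\<alpha> (\<beta> i))) [1..<Suc k'])"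
  by (simp add: Fsig_def)

lemma iota_val: "iota C so sg b k (g, \<alpha>) =
     (\<alpha>, Comp C (chainmap C so sg 0 (\<alpha> 0)) g
          # map (\<lambda>i. chainmap C so sg (\<alpha> (i - 1)) (\<alpha> i)) [1..<Suc k])"
  by (simp add: iota_def)

lemma list_eqI:
  assumes "length \<omega> = Suc k" "\<omega> ! 0 = h" "\<And>i. 1 \<le> i \<Longrightarrow> i \<le> k \<Longrightarrow> \<omega> ! i = F i"
  shows "h # map F [1..<Suc k] = \<omega>"
proof (rule nth_equalityI)
  show "length (h # map F [1..<Suc k]) = length \<omega>" using assms by simp
  fix i assume "i < length (h # map F [1..<Suc k])"
  then show "(h # map F [1..<Suc k]) ! i = \<omega> ! i"
    using assms by (cases "i = 0") (auto simp del: upt_Suc)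
qed

locale chn =
  fixes C :: "('o, 'm) cat" and n :: nat and so :: "nat \<Rightarrow> 'o" and sg :: "nat \<Rightarrow> 'm"
  assumes cat: "small_category C" and ch: "is_chain C n so sg"
begin

abbreviation "cm \<equiv> chainmap C so sg"

lemma cm_hom: "i \<le> j \<Longrightarrow> j \<le> n \<Longrightarrow> cm i j \<in> Hom C (so i) (so j)"
  using chainmap_hom[OF cat ch] by blast

lemma cm_comp: "i \<le> j \<Longrightarrow> j \<le> l \<Longrightarrow> l \<le> n \<Longrightarrow> Comp C (cm j l) (cm i j) = cm i l"
  using chainmap_comp[OF cat ch] by blast

lemma Fsig_act_mem:
  assumes f: "f \<in> Hom C b' b" and \<beta>: "\<beta> \<in> Delta k' k" and x: "x \<in> PSets (Fsig C n so sg) b k"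
  shows "PAct (Fsig C n so sg) f k k' \<beta> x \<in> PSets (Fsig C n so sg) b' k'"
proof -
  obtain \<alpha> \<omega> where xe: "x = (\<alpha>, \<omega>)" by (cases x)
  have \<alpha>: "\<alpha> \<in> Delta k n" and h0: "\<omega> ! 0 \<in> Hom C b (so (\<alpha> 0))" using x xe by (auto simp: Fsig_mem)
  have b0: "\<beta> 0 \<le> k" using Delta_le[OF \<beta>] by simp
  have m: "\<alpha> 0 \<le> \<alpha> (\<beta> 0)" "\<alpha> (\<beta> 0) \<le> n" using Delta_mono[OF \<alpha>] Delta_le[OF \<alpha>] b0 by auto
  have hc: "Comp C (Comp C (cm (\<alpha> 0) (\<alpha> (\<beta> 0))) (\<omega> ! 0)) f \<in> Hom C b' (so (\<alpha> (\<beta> 0)))"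
    by (rule comp_hom[OF cat f comp_hom[OF cat h0 cm_hom[OF m]]])
  show ?thesis unfolding xe Fsig_act Fsig_mem
    using hc dcomp_Delta[OF \<alpha> \<beta>] by (auto simp del: upt_Suc)
qed

lemma Fsig_id:
  assumes x: "x \<in> PSets (Fsig C n so sg) b k"
  shows "PAct (Fsig C n so sg) (Id C b) k k (did k) x = x"
proof -
  obtain \<alpha> \<omega> where xe: "x = (\<alpha>, \<omega>)" by (cases x)
  have \<alpha>: "\<alpha> \<in> Delta k n" and h0: "\<omega> ! 0 \<in> Hom C b (so (\<alpha> 0))" and len: "length \<omega> = Suc k"
    and tl: "\<And>i. 1 \<le> i \<Longrightarrow> i \<le> k \<Longrightarrow> \<omega> ! i = cm (\<alpha> (i - 1)) (\<alpha> i)"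
    using x xe by (auto simp: Fsig_mem)
  have hd: "Comp C (Comp C (cm (\<alpha> 0) (\<alpha> 0)) (\<omega> ! 0)) (Id C b) = \<omega> ! 0"
    using chainmap_id[of "\<alpha> 0" "\<alpha> 0" C so sg] id_l[OF cat h0] id_r[OF cat h0] by (simp add: did_def)
  have "Comp C (Comp C (cm (\<alpha> 0) (\<alpha> (did k 0))) (\<omega> ! 0)) (Id C b)
        # map (\<lambda>i. cm (\<alpha> (did k (i - 1))) (\<alpha> (did k i))) [1..<Suc k] = \<omega>"
    by (rule list_eqI) (auto simp: len hd tl did_def)
  then show ?thesis unfolding xe Fsig_act by (simp add: dcomp_did[OF \<alpha>])
qed

lemma Fsig_comp:
  assumes f: "f \<in> Hom C b' b" and f': "f' \<in> Hom C b'' b'" and \<beta>: "\<beta> \<in> Delta k' k"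
    and \<beta>': "\<beta>' \<in> Delta k'' k'" and x: "x \<in> PSets (Fsig C n so sg) b k"
  shows "PAct (Fsig C n so sg) f' k' k'' \<beta>' (PAct (Fsig C n so sg) f k k' \<beta> x)
       = PAct (Fsig C n so sg) (Comp C f f') k k'' (dcomp k'' \<beta> \<beta>') x"
proof -
  obtain \<alpha> \<omega> where xe: "x = (\<alpha>, \<omega>)" by (cases x)
  have \<alpha>: "\<alpha> \<in> Delta k n" and h0: "\<omega> ! 0 \<in> Hom C b (so (\<alpha> 0))"
    using x xe by (auto simp: Fsig_mem)
  have b0: "\<beta> 0 \<le> k" "\<beta>' 0 \<le> k'" "\<beta> (\<beta>' 0) \<le> k" using Delta_le[OF \<beta>] Delta_le[OF \<beta>'] by auto
  have m: "\<alpha> 0 \<le> \<alpha> (\<beta> 0)" "\<alpha> (\<beta> 0) \<le> \<alpha> (\<beta> (\<beta>' 0))" "\<alpha> (\<beta> (\<beta>' 0)) \<le> n"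
    using Delta_mono[OF \<alpha>] Delta_le[OF \<alpha>] b0 Delta_mono[OF \<beta>] by auto
  define p where "p = cm (\<alpha> 0) (\<alpha> (\<beta> 0))"
  define q where "q = cm (\<alpha> (\<beta> 0)) (\<alpha> (\<beta> (\<beta>' 0)))"
  have hp: "p \<in> Hom C (so (\<alpha> 0)) (so (\<alpha> (\<beta> 0)))" unfolding p_def using cm_hom m by auto
  have hq: "q \<in> Hom C (so (\<alpha> (\<beta> 0))) (so (\<alpha> (\<beta> (\<beta>' 0))))" unfolding q_def using cm_hom m by auto
  have qp: "Comp C q p = cm (\<alpha> 0) (\<alpha> (\<beta> (\<beta>' 0)))" unfolding p_def q_def using cm_comp m by auto
  have ph: "Comp C p (\<omega> ! 0) \<in> Hom C b (so (\<alpha> (\<beta> 0)))" using comp_hom[OF cat h0 hp] .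
  have phf: "Comp C (Comp C p (\<omega> ! 0)) f \<in> Hom C b' (so (\<alpha> (\<beta> 0)))" using comp_hom[OF cat f ph] .
  have qph: "Comp C (Comp C q p) (\<omega> ! 0) \<in> Hom C b (so (\<alpha> (\<beta> (\<beta>' 0))))"
    using comp_hom[OF cat h0 comp_hom[OF cat hp hq]] .
  have "Comp C (Comp C q (Comp C (Comp C p (\<omega> ! 0)) f)) f'
      = Comp C (Comp C (Comp C q (Comp C p (\<omega> ! 0))) f) f'"
    using assoc[OF cat f ph hq] by simp
  also have "\<dots> = Comp C (Comp C (Comp C (Comp C q p) (\<omega> ! 0)) f) f'"
    using assoc[OF cat h0 hp hq] by simp
  also have "\<dots> = Comp C (Comp C (Comp C q p) (\<omega> ! 0)) (Comp C f f')"
    using assoc[OF cat f' f qph] by simp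
  finally have hd: "Comp C (Comp C q (Comp C (Comp C p (\<omega> ! 0)) f)) f'
      = Comp C (Comp C (cm (\<alpha> 0) (\<alpha> (\<beta> (\<beta>' 0)))) (\<omega> ! 0)) (Comp C f f')" by (simp add: qp)
  have tl: "map (\<lambda>i. cm (dcomp k' \<alpha> \<beta> (\<beta>' (i - 1))) (dcomp k' \<alpha> \<beta> (\<beta>' i))) [1..<Suc k'']
      = map (\<lambda>i. cm (\<alpha> (dcomp k'' \<beta> \<beta>' (i - 1))) (\<alpha> (dcomp k'' \<beta> \<beta>' i))) [1..<Suc k'']"
  proof (rule map_cong[OF refl])
    fix i assume "i \<in> set [1..<Suc k'']"
    then have "i \<le> k''" "i - 1 \<le> k''" by auto
    then show "cm (dcomp k' \<alpha> \<beta> (\<beta>' (i - 1))) (dcomp k' \<alpha> \<beta> (\<beta>' i))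
             = cm (\<alpha> (dcomp k'' \<beta> \<beta>' (i - 1))) (\<alpha> (dcomp k'' \<beta> \<beta>' i))"
      using Delta_le[OF \<beta>'] by simp
  qed
  show ?thesis unfolding xe Fsig_act
    using hd tl b0 dcomp_assoc[OF \<beta> \<beta>'] by (simp add: p_def q_def del: upt_Suc)
qed

lemma Fsig_presheaf: "is_presheaf C (Fsig C n so sg)"
  unfolding is_presheaf_def
  by (intro conjI ballI allI; (rule Fsig_act_mem | rule Fsig_id | rule Fsig_comp); assumption)

lemma iota_mem:
  assumes x: "x \<in> PSets (rep_times C (so 0) n) b k"
  shows "iota C so sg b k x \<in> PSets (Fsig C n so sg) b k"
proof -
  obtain g \<alpha> where xe: "x = (g, \<alpha>)" by (cases x)
  have g: "g \<in> Hom C b (so 0)" and \<alpha>: "\<alpha> \<in> Delta k n" using x xe by auto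
  have "Comp C (cm 0 (\<alpha> 0)) g \<in> Hom C b (so (\<alpha> 0))"
    using comp_hom[OF cat g cm_hom] Delta_le[OF \<alpha>] by auto
  then show ?thesis unfolding xe iota_val Fsig_mem using \<alpha> by (auto simp del: upt_Suc)
qed

lemma iota_nat: "nat_trans C (rep_times C (so 0) n) (Fsig C n so sg) (iota C so sg)"
  unfolding nat_trans_def
proof (intro conjI ballI allI)
  fix b k x assume "x \<in> PSets (rep_times C (so 0) n) b k"
  then show "iota C so sg b k x \<in> PSets (Fsig C n so sg) b k" by (rule iota_mem)
next
  fix b b' f k k' \<beta> x
  assume f: "f \<in> Hom C b' b" and \<beta>: "\<beta> \<in> Delta k' k" and x: "x \<in> PSets (rep_times C (so 0) n) b k"
  obtain g \<alpha> where xe: "x = (g, \<alpha>)" by (cases x)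
  have g: "g \<in> Hom C b (so 0)" and \<alpha>: "\<alpha> \<in> Delta k n" using x xe by auto
  have b0: "\<beta> 0 \<le> k" using Delta_le[OF \<beta>] by auto
  have m: "\<alpha> 0 \<le> \<alpha> (\<beta> 0)" "\<alpha> (\<beta> 0) \<le> n" using Delta_mono[OF \<alpha>] Delta_le[OF \<alpha>] b0 by auto
  have h1: "cm 0 (\<alpha> 0) \<in> Hom C (so 0) (so (\<alpha> 0))" using cm_hom m by auto
  have h2: "cm (\<alpha> 0) (\<alpha> (\<beta> 0)) \<in> Hom C (so (\<alpha> 0)) (so (\<alpha> (\<beta> 0)))" using cm_hom m by auto
  have h12: "Comp C (cm 0 (\<alpha> 0)) g \<in> Hom C b (so (\<alpha> 0))" using comp_hom[OF cat g h1] .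
  have "Comp C (Comp C (cm (\<alpha> 0) (\<alpha> (\<beta> 0))) (Comp C (cm 0 (\<alpha> 0)) g)) f
      = Comp C (Comp C (Comp C (cm (\<alpha> 0) (\<alpha> (\<beta> 0))) (cm 0 (\<alpha> 0))) g) f"
    using assoc[OF cat g h1 h2] by simp
  also have "\<dots> = Comp C (cm 0 (\<alpha> (\<beta> 0))) (Comp C g f)"
    using cm_comp[of 0 "\<alpha> 0" "\<alpha> (\<beta> 0)"] m assoc[OF cat f g comp_hom[OF cat h1 h2]] by simp
  finally have hd: "Comp C (Comp C (cm (\<alpha> 0) (\<alpha> (\<beta> 0))) (Comp C (cm 0 (\<alpha> 0)) g)) f
      = Comp C (cm 0 (\<alpha> (\<beta> 0))) (Comp C g f)" .
  have tl: "map (\<lambda>i. cm (dcomp k' \<alpha> \<beta> (i - 1)) (dcomp k' \<alpha> \<beta> i)) [1..<Suc k']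
      = map (\<lambda>i. cm (\<alpha> (\<beta> (i - 1))) (\<alpha> (\<beta> i))) [1..<Suc k']"
    by (rule map_cong[OF refl]) auto
  show "iota C so sg b' k' (PAct (rep_times C (so 0) n) f k k' \<beta> x) =
        PAct (Fsig C n so sg) f k k' \<beta> (iota C so sg b k x)"
    unfolding xe rep_times_act iota_val Fsig_act using hd tl by (simp del: upt_Suc)
qed

lemma iota_surj0:
  assumes z: "(\<alpha>, \<omega>) \<in> PSets (Fsig C n so sg) b k" and a0: "\<alpha> 0 = 0"
  shows "(\<omega> ! 0, \<alpha>) \<in> PSets (rep_times C (so 0) n) b k" "iota C so sg b k (\<omega> ! 0, \<alpha>) = (\<alpha>, \<omega>)"
proof -
  have \<alpha>: "\<alpha> \<in> Delta k n" and h0: "\<omega> ! 0 \<in> Hom C b (so (\<alpha> 0))" and len: "length \<omega> = Suc k"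
    and tl: "\<And>i. 1 \<le> i \<Longrightarrow> i \<le> k \<Longrightarrow> \<omega> ! i = cm (\<alpha> (i - 1)) (\<alpha> i)"
    using z by (auto simp: Fsig_mem)
  show "(\<omega> ! 0, \<alpha>) \<in> PSets (rep_times C (so 0) n) b k" using \<alpha> h0 a0 by simp
  have "Comp C (cm 0 (\<alpha> 0)) (\<omega> ! 0) = \<omega> ! 0"
    using a0 h0 id_l[OF cat h0] chainmap_id[of 0 0 C so sg] by simp
  then have "Comp C (cm 0 (\<alpha> 0)) (\<omega> ! 0) # map (\<lambda>i. cm (\<alpha> (i - 1)) (\<alpha> i)) [1..<Suc k] = \<omega>"
    by (intro list_eqI) (auto simp: len tl)
  then show "iota C so sg b k (\<omega> ! 0, \<alpha>) = (\<alpha>, \<omega>)" unfolding iota_val by simp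
qed

end



lemma nt_mem: "nat_trans C P Q \<eta> \<Longrightarrow> b \<in> Ob C \<Longrightarrow> x \<in> PSets P b k \<Longrightarrow> \<eta> b k x \<in> PSets Q b k"
  unfolding nat_trans_def by blast

lemma nt_nat: "nat_trans C P Q \<eta> \<Longrightarrow> b \<in> Ob C \<Longrightarrow> b' \<in> Ob C \<Longrightarrow> f \<in> Hom C b' b \<Longrightarrow> \<beta> \<in> Delta k' k \<Longrightarrow>
   x \<in> PSets P b k \<Longrightarrow> \<eta> b' k' (PAct P f k k' \<beta> x) = PAct Q f k k' \<beta> (\<eta> b k x)"
  unfolding nat_trans_def by blast

lemma ps_mem: "is_presheaf C P \<Longrightarrow> b \<in> Ob C \<Longrightarrow> b' \<in> Ob C \<Longrightarrow> f \<in> Hom C b' b \<Longrightarrow> \<beta> \<in> Delta k' k \<Longrightarrow>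
   x \<in> PSets P b k \<Longrightarrow> PAct P f k k' \<beta> x \<in> PSets P b' k'"
  unfolding is_presheaf_def by auto

lemma pushout_generic:
  fixes C :: "('o, 'm) cat" and A :: "('o, 'm, 'a) psh" and B :: "('o, 'm, 'b) psh"
    and Cc :: "('o, 'm, 'c) psh" and D :: "('o, 'm, 'd) psh"
  assumes pA: "is_presheaf C A" and pB: "is_presheaf C B" and pC: "is_presheaf C Cc" and pD: "is_presheaf C D"
    and ntp: "nat_trans C A B tp" and nlf: "nat_trans C A Cc lf"
    and nrt: "nat_trans C B D rt" and nbt: "nat_trans C Cc D bt"
    and comm: "\<forall>b \<in> Ob C. \<forall>k. \<forall>x \<in> PSets A b k. rt b k (tp b k x) = bt b k (lf b k x)"
    and surj: "\<And>b k z. b \<in> Ob C \<Longrightarrow> z \<in> PSets D b k \<Longrightarrow>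
        (\<exists>x \<in> PSets Cc b k. z = bt b k x) \<or> (\<exists>y \<in> PSets B b k. z = rt b k y)"
    and constr: "\<And>(Z :: ('o, 'm, 'z) psh) u v. is_presheaf C Z \<Longrightarrow> nat_trans C B Z u \<Longrightarrow> nat_trans C Cc Z v \<Longrightarrow>
        (\<forall>b \<in> Ob C. \<forall>k. \<forall>x \<in> PSets A b k. u b k (tp b k x) = v b k (lf b k x)) \<Longrightarrow>
        \<exists>w. (\<forall>b \<in> Ob C. \<forall>k. \<forall>y \<in> PSets B b k. w b k (rt b k y) = u b k y) \<and>
            (\<forall>b \<in> Ob C. \<forall>k. \<forall>y \<in> PSets Cc b k. w b k (bt b k y) = v b k y)"
  shows "is_pushout TYPE('z) C A B Cc D tp lf rt bt"
proof -
  have univ: "(\<exists>w. nat_trans C D Z w \<and>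
             (\<forall>b \<in> Ob C. \<forall>k. \<forall>y \<in> PSets B b k. w b k (rt b k y) = u b k y) \<and>
             (\<forall>b \<in> Ob C. \<forall>k. \<forall>y \<in> PSets Cc b k. w b k (bt b k y) = v b k y)) \<and>
        (\<forall>w w'. nat_trans C D Z w \<and>
             (\<forall>b \<in> Ob C. \<forall>k. \<forall>y \<in> PSets B b k. w b k (rt b k y) = u b k y) \<and>
             (\<forall>b \<in> Ob C. \<forall>k. \<forall>y \<in> PSets Cc b k. w b k (bt b k y) = v b k y) \<and>
             nat_trans C D Z w' \<and>
             (\<forall>b \<in> Ob C. \<forall>k. \<forall>y \<in> PSets B b k. w' b k (rt b k y) = u b k y) \<and>
             (\<forall>b \<in> Ob C. \<forall>k. \<forall>y \<in> PSets Cc b k. w' b k (bt b k y) = v b k y) \<longrightarrow>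
             (\<forall>b \<in> Ob C. \<forall>k. \<forall>z \<in> PSets D b k. w b k z = w' b k z))"
    if hZ: "is_presheaf C Z" and hu: "nat_trans C B Z u" and hv: "nat_trans C Cc Z v"
      and hc: "\<forall>b \<in> Ob C. \<forall>k. \<forall>x \<in> PSets A b k. u b k (tp b k x) = v b k (lf b k x)"
    for Z :: "('o, 'm, 'z) psh" and u v
  proof (intro conjI)
    obtain w where wr: "\<forall>b \<in> Ob C. \<forall>k. \<forall>y \<in> PSets B b k. w b k (rt b k y) = u b k y"
      and wb: "\<forall>b \<in> Ob C. \<forall>k. \<forall>y \<in> PSets Cc b k. w b k (bt b k y) = v b k y"
      using constr[OF hZ hu hv hc] by blast
    have "nat_trans C D Z w"
      unfolding nat_trans_def
    proof (intro conjI ballI allI)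
      fix b k z assume b: "b \<in> Ob C" and z: "z \<in> PSets D b k"
      from surj[OF b z] show "w b k z \<in> PSets Z b k"
      proof
        assume "\<exists>x\<in>PSets Cc b k. z = bt b k x"
        then obtain x where x: "x \<in> PSets Cc b k" "z = bt b k x" by blast
        then show ?thesis using wb b nt_mem[OF hv b x(1)] by simp
      next
        assume "\<exists>x\<in>PSets B b k. z = rt b k x"
        then obtain x where x: "x \<in> PSets B b k" "z = rt b k x" by blast
        then show ?thesis using wr b nt_mem[OF hu b x(1)] by simp
      qed
    next
      fix b b' f k k' \<beta> z assume b: "b \<in> Ob C" and b': "b' \<in> Ob C" and f: "f \<in> Hom C b' b"
        and \<beta>: "\<beta> \<in> Delta k' k" and z: "z \<in> PSets D b k"
      from surj[OF b z] show "w b' k' (PAct D f k k' \<beta> z) = PAct Z f k k' \<beta> (w b k z)"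
      proof
        assume "\<exists>x\<in>PSets Cc b k. z = bt b k x"
        then obtain x where x: "x \<in> PSets Cc b k" "z = bt b k x" by blast
        have "w b' k' (PAct D f k k' \<beta> z) = w b' k' (bt b' k' (PAct Cc f k k' \<beta> x))"
          using nt_nat[OF nbt b b' f \<beta> x(1)] x(2) by simp
        also have "\<dots> = v b' k' (PAct Cc f k k' \<beta> x)" using wb b' ps_mem[OF pC b b' f \<beta> x(1)] by blast
        also have "\<dots> = PAct Z f k k' \<beta> (v b k x)" using nt_nat[OF hv b b' f \<beta> x(1)] .
        also have "\<dots> = PAct Z f k k' \<beta> (w b k z)" using wb b x by simp
        finally show ?thesis .
      next
        assume "\<exists>x\<in>PSets B b k. z = rt b k x"
        then obtain x where x: "x \<in> PSets B b k" "z = rt b k x" by blast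
        have "w b' k' (PAct D f k k' \<beta> z) = w b' k' (rt b' k' (PAct B f k k' \<beta> x))"
          using nt_nat[OF nrt b b' f \<beta> x(1)] x(2) by simp
        also have "\<dots> = u b' k' (PAct B f k k' \<beta> x)" using wr b' ps_mem[OF pB b b' f \<beta> x(1)] by blast
        also have "\<dots> = PAct Z f k k' \<beta> (u b k x)" using nt_nat[OF hu b b' f \<beta> x(1)] .
        also have "\<dots> = PAct Z f k k' \<beta> (w b k z)" using wr b x by simp
        finally show ?thesis .
      qed
    qed
    then show "\<exists>w. nat_trans C D Z w \<and>
             (\<forall>b \<in> Ob C. \<forall>k. \<forall>y \<in> PSets B b k. w b k (rt b k y) = u b k y) \<and>
             (\<forall>b \<in> Ob C. \<forall>k. \<forall>y \<in> PSets Cc b k. w b k (bt b k y) = v b k y)"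
      using wr wb by blast
  next
    show "\<forall>w w'. nat_trans C D Z w \<and>
             (\<forall>b \<in> Ob C. \<forall>k. \<forall>y \<in> PSets B b k. w b k (rt b k y) = u b k y) \<and>
             (\<forall>b \<in> Ob C. \<forall>k. \<forall>y \<in> PSets Cc b k. w b k (bt b k y) = v b k y) \<and>
             nat_trans C D Z w' \<and>
             (\<forall>b \<in> Ob C. \<forall>k. \<forall>y \<in> PSets B b k. w' b k (rt b k y) = u b k y) \<and>
             (\<forall>b \<in> Ob C. \<forall>k. \<forall>y \<in> PSets Cc b k. w' b k (bt b k y) = v b k y) \<longrightarrow>
             (\<forall>b \<in> Ob C. \<forall>k. \<forall>z \<in> PSets D b k. w b k z = w' b k z)"
    proof (intro allI impI ballI)
      fix w w' b k z
      assume H: "nat_trans C D Z w \<and>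
             (\<forall>b \<in> Ob C. \<forall>k. \<forall>y \<in> PSets B b k. w b k (rt b k y) = u b k y) \<and>
             (\<forall>b \<in> Ob C. \<forall>k. \<forall>y \<in> PSets Cc b k. w b k (bt b k y) = v b k y) \<and>
             nat_trans C D Z w' \<and>
             (\<forall>b \<in> Ob C. \<forall>k. \<forall>y \<in> PSets B b k. w' b k (rt b k y) = u b k y) \<and>
             (\<forall>b \<in> Ob C. \<forall>k. \<forall>y \<in> PSets Cc b k. w' b k (bt b k y) = v b k y)"
        and b: "b \<in> Ob C" and z: "z \<in> PSets D b k"
      from surj[OF b z] show "w b k z = w' b k z"
        using H b by auto
    qed
  qed
  show ?thesis unfolding is_pushout_def
    apply (intro conjI[OF pA] conjI[OF pB] conjI[OF pC] conjI[OF pD] conjI[OF ntp] conjI[OF nlf]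
        conjI[OF nrt] conjI[OF nbt] conjI[OF comm])
    apply (intro allI impI)
    apply (elim conjE)
    apply (rule univ; assumption)
    done
qed



lemma case_n0:
  assumes cat: "small_category C" and ch: "is_chain C 0 so sg"
  shows "nat_iso C (rep_times C (so 0) 0) (Fsig C 0 so sg) (iota C so sg)"
proof -
  interpret Z: chn C 0 so sg using cat ch by (unfold_locales)
  define \<theta> where "\<theta> = (\<lambda>(b::'a) (k::nat) (\<alpha>::nat\<Rightarrow>nat, \<omega>::'b list). (\<omega> ! 0, \<alpha>))"
  have a0: "\<alpha> 0 = 0" if "(\<alpha>, \<omega>) \<in> PSets (Fsig C 0 so sg) b k" for \<alpha> \<omega> b k
    using that Delta_le[of \<alpha> k 0 0] by (auto simp: Fsig_mem)
  have nt: "nat_trans C (Fsig C 0 so sg) (rep_times C (so 0) 0) \<theta>"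
    unfolding nat_trans_def
  proof (intro conjI ballI allI)
    fix b k z assume "z \<in> PSets (Fsig C 0 so sg) b k"
    then show "\<theta> b k z \<in> PSets (rep_times C (so 0) 0) b k"
      using Z.iota_surj0(1) a0 by (cases z) (auto simp: \<theta>_def)
  next
    fix b b' f k k' \<beta> z
    assume f: "f \<in> Hom C b' b" and \<beta>: "\<beta> \<in> Delta k' k" and z: "z \<in> PSets (Fsig C 0 so sg) b k"
    obtain \<alpha> \<omega> where ze: "z = (\<alpha>, \<omega>)" by (cases z)
    have az: "\<alpha> 0 = 0" using z ze a0 by blast
    have h0: "\<omega> ! 0 \<in> Hom C b (so 0)" using z ze az by (simp add: Fsig_mem)
    have "\<alpha> \<in> Delta k 0" using z ze by (simp add: Fsig_mem)
    then have ab: "\<alpha> (\<beta> 0) = 0" using Delta_le[OF _ Delta_le[OF \<beta>, of 0]] by fastforce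
    have "Comp C (Comp C (chainmap C so sg (\<alpha> 0) (\<alpha> (\<beta> 0))) (\<omega> ! 0)) f = Comp C (\<omega> ! 0) f"
      using az ab id_l[OF cat h0] chainmap_id[of 0 0 C so sg] by simp
    then show "\<theta> b' k' (PAct (Fsig C 0 so sg) f k k' \<beta> z) = PAct (rep_times C (so 0) 0) f k k' \<beta> (\<theta> b k z)"
      unfolding ze Fsig_act \<theta>_def by simp
  qed
  have li: "\<theta> b k (iota C so sg b k x) = x" if "x \<in> PSets (rep_times C (so 0) 0) b k" for b k x
  proof -
    obtain g \<alpha> where xe: "x = (g, \<alpha>)" by (cases x)
    have g: "g \<in> Hom C b (so 0)" and \<alpha>: "\<alpha> \<in> Delta k 0" using that xe by auto
    have "\<alpha> 0 = 0" using Delta_le[OF \<alpha>, of 0] by simp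
    then show ?thesis unfolding xe iota_val \<theta>_def
      using id_l[OF cat g] chainmap_id[of 0 0 C so sg] by simp
  qed
  have ri: "iota C so sg b k (\<theta> b k y) = y" if "y \<in> PSets (Fsig C 0 so sg) b k" for b k y
    using that Z.iota_surj0(2) a0 by (cases y) (auto simp: \<theta>_def)
  show ?thesis unfolding nat_iso_def
    using rep_times_presheaf[OF cat] Z.Fsig_presheaf Z.iota_nat nt li ri by blast
qed



declare chainmap.simps[simp del]

lemma case_pos:
  fixes C :: "('o, 'm) cat" and n :: nat and so :: "nat \<Rightarrow> 'o" and sg :: "nat \<Rightarrow> 'm"
  assumes cat: "small_category C" and ch: "is_chain C n so sg" and npos: "0 < n"
  shows "is_pushout TYPE('z) C
             (rep_times C (so 0) (n - 1))
             (Fsig C (n - 1) (\<lambda>i. so (Suc i)) (\<lambda>i. sg (Suc i)))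
             (rep_times C (so 0) n)
             (Fsig C n so sg)
             (\<lambda>b k (g, \<alpha>). iota C (\<lambda>i. so (Suc i)) (\<lambda>i. sg (Suc i)) b k (Comp C (sg 1) g, \<alpha>))
             (\<lambda>b k (g, \<alpha>). (g, delta0_comp k \<alpha>))
             (\<lambda>b k (\<alpha>, \<omega>). (delta0_comp k \<alpha>, \<omega>))
             (iota C so sg)"
proof -
  interpret D: chn C n so sg using cat ch by unfold_locales
  interpret B: chn C "n - 1" "\<lambda>i. so (Suc i)" "\<lambda>i. sg (Suc i)"
    using cat chain_shift[OF ch npos] by unfold_locales
  let ?A = "rep_times C (so 0) (n - 1)"
  let ?B = "Fsig C (n - 1) (\<lambda>i. so (Suc i)) (\<lambda>i. sg (Suc i))"
  let ?Cc = "rep_times C (so 0) n"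
  let ?D = "Fsig C n so sg"
  let ?tp = "\<lambda>b k (g, \<alpha>). iota C (\<lambda>i. so (Suc i)) (\<lambda>i. sg (Suc i)) b k (Comp C (sg 1) g, \<alpha>)"
  let ?lf = "\<lambda>b k (g, \<alpha>). (g, delta0_comp k \<alpha>)"
  let ?rt = "\<lambda>b k (\<alpha>, \<omega>). (delta0_comp k \<alpha>, \<omega>)"
  let ?bt = "iota C so sg"
  have sg1: "sg 1 \<in> Hom C (so 0) (so (Suc 0))" using chain_sg[OF ch, of 0] npos by simp
  have pc: "nat_trans C ?A (rep_times C (so (Suc 0)) (n - 1)) (\<lambda>b k (g, \<alpha>). (Comp C (sg 1) g, \<alpha>))"
    unfolding nat_trans_def
  proof (intro conjI ballI allI)
    fix b k x assume "x \<in> PSets ?A b k"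
    then show "(case x of (g, \<alpha>) \<Rightarrow> (Comp C (sg 1) g, \<alpha>)) \<in> PSets (rep_times C (so (Suc 0)) (n - 1)) b k"
      using comp_hom[OF cat _ sg1] by (cases x) auto
  next
    fix b b' f k k' \<beta> x assume f: "f \<in> Hom C b' b" and x: "x \<in> PSets ?A b k"
    obtain g \<alpha> where xe: "x = (g, \<alpha>)" by (cases x)
    have g: "g \<in> Hom C b (so 0)" using x xe by simp
    show "(case PAct ?A f k k' \<beta> x of (g, \<alpha>) \<Rightarrow> (Comp C (sg 1) g, \<alpha>)) =
          PAct (rep_times C (so (Suc 0)) (n - 1)) f k k' \<beta> (case x of (g, \<alpha>) \<Rightarrow> (Comp C (sg 1) g, \<alpha>))"
      unfolding xe using assoc[OF cat f g sg1] by simp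
  qed
  have ntp: "nat_trans C ?A ?B ?tp"
  proof -
    have "?tp = (\<lambda>b k x. iota C (\<lambda>i. so (Suc i)) (\<lambda>i. sg (Suc i)) b k
                  ((\<lambda>b k (g, \<alpha>). (Comp C (sg 1) g, \<alpha>)) b k x))"
      by (intro ext) (auto split: prod.split)
    then show ?thesis using nat_trans_comp[OF pc B.iota_nat] by simp
  qed
  have nlf: "nat_trans C ?A ?Cc ?lf"
    unfolding nat_trans_def
    by (auto simp: delta0_Delta[OF _ npos] delta0_dcomp)
  have nrt: "nat_trans C ?B ?D ?rt"
    unfolding nat_trans_def
  proof (intro conjI ballI allI)
    fix b k x assume x: "x \<in> PSets ?B b k"
    obtain \<alpha> \<omega> where xe: "x = (\<alpha>, \<omega>)" by (cases x)
    have \<alpha>: "\<alpha> \<in> Delta k (n - 1)" and h0: "\<omega> ! 0 \<in> Hom C b (so (Suc (\<alpha> 0)))" and len: "length \<omega> = Suc k"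
      and tl: "\<And>i. 1 \<le> i \<Longrightarrow> i \<le> k \<Longrightarrow> \<omega> ! i = D.cm (Suc (\<alpha> (i - 1))) (Suc (\<alpha> i))"
      using x xe by (auto simp: Fsig_mem)
    show "?rt b k x \<in> PSets ?D b k"
      unfolding xe using delta0_Delta[OF \<alpha> npos] h0 len tl by (simp add: Fsig_mem)
  next
    fix b b' f k k' \<beta> x assume f: "f \<in> Hom C b' b" and \<beta>: "\<beta> \<in> Delta k' k" and x: "x \<in> PSets ?B b k"
    obtain \<alpha> \<omega> where xe: "x = (\<alpha>, \<omega>)" by (cases x)
    have b0: "\<beta> 0 \<le> k" using Delta_le[OF \<beta>] by simp
    have tl: "map (\<lambda>i. D.cm (Suc (\<alpha> (\<beta> (i - 1)))) (Suc (\<alpha> (\<beta> i)))) [1..<Suc k'] =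
              map (\<lambda>i. D.cm (delta0_comp k \<alpha> (\<beta> (i - 1))) (delta0_comp k \<alpha> (\<beta> i))) [1..<Suc k']"
      by (rule map_cong[OF refl]) (auto simp: Delta_le[OF \<beta>] simp del: chainmap.simps)
    show "?rt b' k' (PAct ?B f k k' \<beta> x) = PAct ?D f k k' \<beta> (?rt b k x)"
      unfolding xe by (simp del: upt_Suc chainmap.simps add: Fsig_act b0 delta0_dcomp[OF \<beta>] tl[symmetric]) (auto simp: Delta_le[OF \<beta>] simp del: chainmap.simps)
  qed
  have nbt: "nat_trans C ?Cc ?D ?bt" by (rule D.iota_nat)
  have square: "?rt b k (?tp b k x) = ?bt b k (?lf b k x)" if x: "x \<in> PSets ?A b k" for b k x
  proof -
    obtain g \<alpha> where xe: "x = (g, \<alpha>)" by (cases x)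
    have g: "g \<in> Hom C b (so 0)" and \<alpha>: "\<alpha> \<in> Delta k (n - 1)" using x xe by auto
    have a0: "Suc (\<alpha> 0) \<le> n" using Delta_le[OF \<alpha>, of 0] npos by simp
    have hX: "D.cm (Suc 0) (Suc (\<alpha> 0)) \<in> Hom C (so (Suc 0)) (so (Suc (\<alpha> 0)))" using D.cm_hom a0 by simp
    have c01: "D.cm 0 (Suc 0) = sg 1" using id_r[OF cat sg1] by (simp add: chainmap.simps)
    have "D.cm 0 (Suc (\<alpha> 0)) = Comp C (D.cm (Suc 0) (Suc (\<alpha> 0))) (D.cm 0 (Suc 0))"
      using D.cm_comp[of 0 "Suc 0" "Suc (\<alpha> 0)"] a0 by simp
    then have hd: "Comp C (D.cm 0 (Suc (\<alpha> 0))) g = Comp C (D.cm (Suc 0) (Suc (\<alpha> 0))) (Comp C (sg 1) g)"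
      using assoc[OF cat g sg1 hX] c01 by simp
    have tl: "map (\<lambda>i. D.cm (Suc (\<alpha> (i - 1))) (Suc (\<alpha> i))) [1..<Suc k] =
              map (\<lambda>i. D.cm (delta0_comp k \<alpha> (i - 1)) (delta0_comp k \<alpha> i)) [1..<Suc k]"
      by (rule map_cong[OF refl]) auto
    show ?thesis unfolding xe by (simp del: upt_Suc add: iota_val tl[symmetric]) (use hd in auto)
  qed
  have surj: "(\<exists>x \<in> PSets ?Cc b k. z = ?bt b k x) \<or> (\<exists>y \<in> PSets ?B b k. z = ?rt b k y)"
    if z: "z \<in> PSets ?D b k" for b k z
  proof -
    obtain \<alpha> \<omega> where ze: "z = (\<alpha>, \<omega>)" by (cases z)
    show ?thesis
    proof (cases "\<alpha> 0 = 0")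
      case True
      then show ?thesis using D.iota_surj0[OF z[unfolded ze] True] ze by metis
    next
      case False
      have \<alpha>: "\<alpha> \<in> Delta k n" and h0: "\<omega> ! 0 \<in> Hom C b (so (\<alpha> 0))" and len: "length \<omega> = Suc k"
        and tl: "\<And>i. 1 \<le> i \<Longrightarrow> i \<le> k \<Longrightarrow> \<omega> ! i = D.cm (\<alpha> (i - 1)) (\<alpha> i)"
        using z ze by (auto simp: Fsig_mem)
      define \<alpha>' where "\<alpha>' = (\<lambda>i. if i \<le> k then \<alpha> i - 1 else 0)"
      have pos: "\<And>i. i \<le> k \<Longrightarrow> 1 \<le> \<alpha> i" using False Delta_mono[OF \<alpha>, of 0] by fastforce
      have sa: "\<And>i. i \<le> k \<Longrightarrow> Suc (\<alpha>' i) = \<alpha> i" unfolding \<alpha>'_def using pos by fastforce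
      have \<alpha>': "\<alpha>' \<in> Delta k (n - 1)"
        unfolding Delta_def \<alpha>'_def using Delta_le[OF \<alpha>] Delta_mono[OF \<alpha>] by (auto simp: diff_le_mono)
      have d: "delta0_comp k \<alpha>' = \<alpha>"
        unfolding delta0_comp_def using sa Delta_out[OF \<alpha>] by (auto simp: fun_eq_iff)
      have y: "(\<alpha>', \<omega>) \<in> PSets ?B b k"
        unfolding Fsig_mem using \<alpha>' h0 len tl sa by (auto simp: sa)
      have "z = ?rt b k (\<alpha>', \<omega>)" using ze d by simp
      then show ?thesis using y by blast
    qed
  qed
  have constr: "\<exists>w. (\<forall>b \<in> Ob C. \<forall>k. \<forall>y \<in> PSets ?B b k. w b k (?rt b k y) = u b k y) \<and>
            (\<forall>b \<in> Ob C. \<forall>k. \<forall>y \<in> PSets ?Cc b k. w b k (?bt b k y) = v b k y)"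
    if hZ: "is_presheaf C Z" and hu: "nat_trans C ?B Z u" and hv: "nat_trans C ?Cc Z v"
      and hc: "\<forall>b \<in> Ob C. \<forall>k. \<forall>x \<in> PSets ?A b k. u b k (?tp b k x) = v b k (?lf b k x)"
    for Z :: "('o, 'm, 'z) psh" and u v
  proof -
    define w where "w = (\<lambda>b k (\<alpha>::nat\<Rightarrow>nat, \<omega>::'m list). if \<alpha> 0 = 0 then v b k (\<omega> ! 0, \<alpha>)
                            else u b k (\<lambda>i. if i \<le> k then \<alpha> i - 1 else 0, \<omega>))"
    have wr: "w b k (?rt b k y) = u b k y" if y: "y \<in> PSets ?B b k" for b k y
    proof -
      obtain \<alpha> \<omega> where ye: "y = (\<alpha>, \<omega>)" by (cases y)
      have \<alpha>: "\<alpha> \<in> Delta k (n - 1)" using y ye by (simp add: Fsig_mem)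
      have "(\<lambda>i. if i \<le> k then delta0_comp k \<alpha> i - 1 else 0) = \<alpha>"
        using Delta_out[OF \<alpha>] by (auto simp: fun_eq_iff)
      then show ?thesis unfolding ye w_def by simp
    qed
    have wb: "w b k (?bt b k y) = v b k y" if b: "b \<in> Ob C" and y: "y \<in> PSets ?Cc b k" for b k y
    proof -
      obtain g \<alpha> where ye: "y = (g, \<alpha>)" by (cases y)
      have g: "g \<in> Hom C b (so 0)" and \<alpha>: "\<alpha> \<in> Delta k n" using y ye by auto
      show ?thesis
      proof (cases "\<alpha> 0 = 0")
        case True
        then show ?thesis unfolding ye iota_val w_def
          using id_l[OF cat g] chainmap_id[of 0 0 C so sg] by (simp add: chainmap.simps)
      next
        case False
        define \<alpha>' where "\<alpha>' = (\<lambda>i. if i \<le> k then \<alpha> i - 1 else 0)"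
        have pos: "\<And>i. i \<le> k \<Longrightarrow> 1 \<le> \<alpha> i" using False Delta_mono[OF \<alpha>, of 0] by fastforce
        have sa: "\<And>i. i \<le> k \<Longrightarrow> Suc (\<alpha>' i) = \<alpha> i" unfolding \<alpha>'_def using pos by fastforce
        have \<alpha>': "\<alpha>' \<in> Delta k (n - 1)"
          unfolding Delta_def \<alpha>'_def using Delta_le[OF \<alpha>] Delta_mono[OF \<alpha>] by (auto simp: diff_le_mono)
        have d: "delta0_comp k \<alpha>' = \<alpha>"
          unfolding delta0_comp_def using sa Delta_out[OF \<alpha>] by (auto simp: fun_eq_iff)
        have xA: "(g, \<alpha>') \<in> PSets ?A b k" using g \<alpha>' by simp
        have lfe: "?lf b k (g, \<alpha>') = (g, \<alpha>)" using d by simp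
        have "w b k (?bt b k (g, \<alpha>)) = w b k (?rt b k (?tp b k (g, \<alpha>')))"
          using square[OF xA] lfe by simp
        also have "\<dots> = u b k (?tp b k (g, \<alpha>'))" using wr nt_mem[OF ntp b xA] by blast
        also have "\<dots> = v b k (?lf b k (g, \<alpha>'))" using hc b xA by blast
        also have "\<dots> = v b k (g, \<alpha>)" using lfe by simp
        finally show ?thesis unfolding ye .
      qed
    qed
    show ?thesis using wr wb by blast
  qed
  show ?thesis
    apply (rule pushout_generic[OF rep_times_presheaf[OF cat] B.Fsig_presheaf rep_times_presheaf[OF cat]
          D.Fsig_presheaf ntp nlf nrt nbt])
    using square surj constr by blast+
qed


theorem proposition2p3:
  fixes C :: "('o, 'm) cat" and n :: nat and so :: "nat \<Rightarrow> 'o" and sg :: "nat \<Rightarrow> 'm"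
  assumes "small_category C"
    and "is_chain C n so sg"
  shows "(n = 0 \<longrightarrow> nat_iso C (rep_times C (so 0) 0) (Fsig C 0 so sg) (iota C so sg))
       \<and> (0 < n \<longrightarrow>
           is_pushout TYPE('z) C
             (rep_times C (so 0) (n - 1))
             (Fsig C (n - 1) (\<lambda>i. so (Suc i)) (\<lambda>i. sg (Suc i)))
             (rep_times C (so 0) n)
             (Fsig C n so sg)
             (\<lambda>b k (g, \<alpha>). iota C (\<lambda>i. so (Suc i)) (\<lambda>i. sg (Suc i)) b k (Comp C (sg 1) g, \<alpha>))
             (\<lambda>b k (g, \<alpha>). (g, delta0_comp k \<alpha>))
             (\<lambda>b k (\<alpha>, \<omega>). (delta0_comp k \<alpha>, \<omega>))
             (iota C so sg))"
  using case_n0[OF assms(1)] assms(2) case_pos[OF assms] by auto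

end
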